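(* Let $n\ge 3$ be odd and let $D_{2n}$ be the dihedral group of order $2n$. Then $\Gamma_{D_{2n},H}$ admits a perfect code for every normal subgroup $H$ of $D_{2n}$.
   Context: For a normal subgroup $H$ of a finite group $G$ with identity $e$, the subgroup sum graph $\Gamma_{G,H}$ is the simple undirected graph with vertex set $G$ in which distinct vertices $x,y$ are adjacent if and only if $xy\in H\setminus\{e\}$. A perfect code in a graph is a set $C$ of vertices that is independent and such that every vertex not in $C$ is adjacent to exactly one vertex of $C$. *)

theory Defs
  imports "HOL-Algebra.Algebra"
begin

text \<open>Dihedral group of order 2n: the element (i, a) stands for r^i s^a
  (r a rotation of order n, s a reflection), with s r^j = r^(-j) s.\<close>
definition dihedral_group :: "nat \<Rightarrow> (nat \<times> bool) monoid" where
  "dihedral_group n =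
     \<lparr> carrier = {0..<n} \<times> UNIV,
       monoid.mult = (\<lambda>(i, a) (j, b). ((if a then i + (n - j) else i + j) mod n, a \<noteq> b)),
       monoid.one = (0, False) \<rparr>"

definition sum_graph_adj :: "('a, 'b) monoid_scheme \<Rightarrow> 'a set \<Rightarrow> 'a \<Rightarrow> 'a \<Rightarrow> bool" where
  "sum_graph_adj G H x y \<longleftrightarrow>
     x \<in> carrier G \<and> y \<in> carrier G \<and> x \<noteq> y \<and>
     x \<otimes>\<^bsub>G\<^esub> y \<in> H - {\<one>\<^bsub>G\<^esub>}"

definition perfect_code :: "'a set \<Rightarrow> ('a \<Rightarrow> 'a \<Rightarrow> bool) \<Rightarrow> 'a set \<Rightarrow> bool" where
  "perfect_code V E C \<longleftrightarrow>
     C \<subseteq> V \<and>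
     (\<forall>x\<in>C. \<forall>y\<in>C. \<not> E x y) \<and>
     (\<forall>v\<in>V - C. \<exists>!c. c \<in> C \<and> E v c)"

end

theory Submission imports Defs begin

lemma dg_mult: "(i,a) \<otimes>\<^bsub>dihedral_group n\<^esub> (j,b) = ((if a then i + (n - j) else i + j) mod n, a \<noteq> b)"
  by (simp add: dihedral_group_def)
lemma dg_one: "\<one>\<^bsub>dihedral_group n\<^esub> = (0, False)"
  by (simp add: dihedral_group_def)
lemma dg_carrier: "carrier (dihedral_group n) = {0..<n} \<times> UNIV"
  by (simp add: dihedral_group_def)

lemma mod2_lem: "(2*(a mod int n) + b) mod int n = (2*a + b) mod int n" for a b :: int
  by (metis mod_add_left_eq mod_mult_right_eq)

lemma refl_all:
  assumes "odd n" "n \<ge> 3" "H \<lhd> dihedral_group n" "(i,True) \<in> H"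
  shows "H = carrier (dihedral_group n)"
proof -
  interpret N: normal H "dihedral_group n" by fact
  have iH: "i < n" using N.subset assms(4) by (auto simp: dg_carrier)
  have refl: "(k,True) \<in> H" if "k < n" for k
  proof -
    define j where "j = ((i+k)*((n+1) div 2)) mod n"
    have jn: "j < n" using assms by (simp add: j_def)
    have inv: "inv\<^bsub>dihedral_group n\<^esub> (j,True) = (j,True)"
      by (rule N.inv_equality) (use jn in \<open>auto simp: dg_mult dg_one dg_carrier\<close>)
    have "(j,True) \<otimes>\<^bsub>dihedral_group n\<^esub> (i,True) \<otimes>\<^bsub>dihedral_group n\<^esub> inv\<^bsub>dihedral_group n\<^esub> (j,True) \<in> H"
      by (rule N.inv_op_closed2) (use jn assms in \<open>auto simp: dg_carrier\<close>)
    moreover have "((j + (n-i)) mod n + j) mod n = k"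
    proof -
      have "int (((j + (n-i)) mod n + j) mod n) = (2*int j + n - i) mod n"
        using iH by (simp add: zmod_int of_nat_diff mod_add_right_eq algebra_simps) 
      also have "\<dots> = (2*int (((i+k)*((n+1) div 2))) + n - i) mod n"
        unfolding j_def zmod_int using mod2_lem[of _ n "int n - int i"] by (simp add: algebra_simps)
      also have "2*int (((i+k)*((n+1) div 2))) = (int i + k) * n + i + k"
        proof -
        obtain m where m: "n = 2*m+1" using assms(1) oddE by blast
        have "(n+1) div 2 = m+1" using m by simp
        then show ?thesis using m by (simp add: algebra_simps)
      qed
      also have "((int i + k) * n + i + k + n - i) mod n = (int k + (int i+k+1)*int n) mod int n"
        by (simp add: algebra_simps)
      also have "\<dots> = int k" using \<open>k < n\<close> by (subst mod_mult_self1) simp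
      finally show ?thesis by linarith
    qed
    ultimately show ?thesis by (simp add: inv dg_mult)
  qed
  show ?thesis
  proof
    show "H \<subseteq> carrier (dihedral_group n)" by (rule N.subset)
    show "carrier (dihedral_group n) \<subseteq> H"
    proof clarify
      fix k b assume "(k,b) \<in> carrier (dihedral_group n)"
      then have k: "k < n" by (simp add: dg_carrier)
      show "(k,b) \<in> H"
      proof (cases b)
        case True then show ?thesis using refl k by simp
      next
        case False
        have "(k,True) \<otimes>\<^bsub>dihedral_group n\<^esub> (0,True) \<in> H"
          using refl[of k] refl[of 0] k assms(2) subgroup.m_closed[OF normal_imp_subgroup[OF assms(3)]] by simp
        then show ?thesis using False k by (simp add: dg_mult)
      qed
    qed
  qed
qed

lemma negmod: "a < n \<Longrightarrow> ((n - a) mod n + a) mod (n::nat) = 0"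
  by (simp add: mod_add_left_eq)

definition KI :: "nat \<Rightarrow> (nat \<times> bool) set \<Rightarrow> int set" where
  "KI n H = {x. (nat (x mod int n), False) \<in> H}"

locale dctx =
  fixes n :: nat and H :: "(nat \<times> bool) set"
  assumes odd: "odd n" and n3: "n \<ge> 3" and nrm: "H \<lhd> dihedral_group n"
    and norefl: "\<And>i. (i, True) \<notin> H"
begin

abbreviation "G \<equiv> dihedral_group n"
abbreviation "K \<equiv> KI n H"

lemma sg: "subgroup H G" using nrm normal_imp_subgroup by blast
lemma grp: "group G" using nrm normal_def by blast

lemma KI_nat: "int m \<in> K \<longleftrightarrow> (m mod n, False) \<in> H"
  by (simp add: KI_def flip: zmod_int)

lemma KI_cong: "x mod int n = y mod int n \<Longrightarrow> x \<in> K \<longleftrightarrow> y \<in> K"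
  by (simp add: KI_def)

lemma KI_0: "0 \<in> K"
  using subgroup.one_closed[OF sg] by (simp add: KI_def dg_one)

lemma KI_add: assumes "x \<in> K" "y \<in> K" shows "x + y \<in> K"
proof -
  have "(nat (x mod int n), False) \<otimes>\<^bsub>G\<^esub> (nat (y mod int n), False) \<in> H"
    using assms subgroup.m_closed[OF sg] by (simp add: KI_def)
  then have "((nat (x mod int n) + nat (y mod int n)) mod n, False) \<in> H" by (simp add: dg_mult)
  then have "int (nat (x mod int n) + nat (y mod int n)) \<in> K" using KI_nat by blast
  moreover have "int (nat (x mod int n) + nat (y mod int n)) mod n = (x + y) mod n"
    using n3 by (simp add: mod_add_eq)
  ultimately show ?thesis using KI_cong by blast
qed

lemma KI_neg: assumes "x \<in> K" shows "- x \<in> K"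
proof -
  let ?a = "nat (x mod int n)"
  have an: "?a < n" using n3 by (simp add: nat_less_iff)
  have "inv\<^bsub>G\<^esub> (?a, False) = ((n - ?a) mod n, False)"
    by (rule group.inv_equality[OF grp]) (use an negmod in \<open>auto simp: dg_mult dg_one dg_carrier\<close>)
  moreover have "inv\<^bsub>G\<^esub> (?a, False) \<in> H"
    using assms subgroup.m_inv_closed[OF sg] by (simp add: KI_def)
  ultimately have "int (n - ?a) \<in> K" using KI_nat by simp
  moreover have "int (n - ?a) mod n = (-x) mod n"
    using an n3 by (simp add: of_nat_diff mod_diff_right_eq[symmetric] mod_minus_eq)
  ultimately show ?thesis using KI_cong by blast
qed

lemma KI_diff: "x \<in> K \<Longrightarrow> y \<in> K \<Longrightarrow> x - y \<in> K"
  using KI_add KI_neg by (metis diff_conv_add_uminus)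

lemma KI_multn: "c * int n \<in> K"
  using KI_0 KI_cong[of 0 "c * int n"] by simp

lemma KI_mult: assumes "x \<in> K" shows "int k * x \<in> K"
  by (induction k) (auto simp: KI_0 algebra_simps intro: KI_add assms)

lemma KI_half: assumes "2 * x \<in> K" shows "x \<in> K"
proof -
  obtain m where m: "n = 2*m+1" using odd oddE by blast
  have "int (m+1) * (2*x) - x * int n \<in> K" using KI_mult[OF assms] KI_multn KI_diff by blast
  moreover have "int (m+1) * (2*x) - x * int n = x" using m by (simp add: algebra_simps)
  ultimately show ?thesis by simp
qed


definition cv :: "nat \<Rightarrow> int" where "cv i = (if 2*i < n then int i else int i - int n)"
definition ca :: "nat \<Rightarrow> int" where "ca i = \<bar>cv i\<bar>"
definition T :: "nat set" where "T = {i. i < n \<and> (\<forall>j<n. int i - int j \<in> K \<longrightarrow> ca i \<le> ca j)}"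
definition ng :: "nat \<Rightarrow> nat" where "ng i = (n - i) mod n"

lemma cv_mod: "cv i mod int n = int i mod int n"
  by (simp add: cv_def)

lemma cv_inj: "i < n \<Longrightarrow> j < n \<Longrightarrow> cv i = cv j \<Longrightarrow> i = j"
  by (auto simp: cv_def split: if_splits)

lemma ng_lt: "ng i < n" using n3 by (simp add: ng_def)

lemma ng_mod: "i < n \<Longrightarrow> int (ng i) mod int n = (- int i) mod int n"
proof -
  assume i: "i < n"
  have "int (ng i) = int (n - i) mod int n" by (simp add: ng_def zmod_int)
  also have "\<dots> = (int n - int i) mod int n" using i by (simp add: of_nat_diff)
  also have "\<dots> = (- int i) mod int n" by (simp add: mod_diff_left_eq[symmetric])
  finally show ?thesis by simp
qed

lemma ca_ng: "i < n \<Longrightarrow> ca (ng i) = ca i"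
proof -
  assume i: "i < n"
  show ?thesis
  proof (cases "i = 0")
    case True then show ?thesis by (simp add: ng_def)
  next
    case False
    then have "ng i = n - i" using i by (simp add: ng_def)
    moreover have "2*i \<noteq> n" using odd by auto
    ultimately show ?thesis using i False by (auto simp: ca_def cv_def of_nat_diff)
  qed
qed

lemma ng_ng: "i < n \<Longrightarrow> ng (ng i) = i"
  by (cases "i = 0") (auto simp: ng_def)

lemma T_exists: "\<exists>t\<in>T. int t - x \<in> K"
proof -
  let ?S = "\<lambda>j. j < n \<and> int j - x \<in> K"
  have "?S (nat (x mod int n))"
  proof
    show "nat (x mod int n) < n" using n3 by (simp add: nat_less_iff)
    have e: "int (nat (x mod int n)) = x mod int n" using n3 by simp
    have "x mod int n - x = (- (x div int n)) * int n"
      using minus_div_mult_eq_mod[of x "int n"] by (simp add: algebra_simps)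
    then have "int (nat (x mod int n)) - x = (- (x div int n)) * int n" using e by simp
    then show "int (nat (x mod int n)) - x \<in> K" using KI_multn[of "- (x div int n)"] by simp
  qed
  then obtain t where t: "?S t" and tm: "\<And>y. ?S y \<Longrightarrow> nat (ca t) \<le> nat (ca y)"
    using ex_has_least_nat[of ?S _ "\<lambda>j. nat (ca j)"] by blast
  have "t \<in> T"
    unfolding T_def
  proof (intro CollectI conjI allI impI)
    show "t < n" using t by simp
    fix j assume j: "j < n" "int t - int j \<in> K"
    have "int j - x \<in> K" using KI_diff[of "int t - x" "int t - int j"] t j by simp
    then have "nat (ca t) \<le> nat (ca j)" using tm j by blast
    then show "ca t \<le> ca j" by (simp add: ca_def)
  qed
  then show ?thesis using t by blast
qed

lemma T_unique: assumes "a \<in> T" "b \<in> T" "int a - int b \<in> K" shows "a = b"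
proof -
  have an: "a < n" and bn: "b < n" using assms by (auto simp: T_def)
  have Ta: "\<And>j. j < n \<Longrightarrow> int a - int j \<in> K \<Longrightarrow> ca a \<le> ca j" using assms(1) by (simp add: T_def)
  have Tb: "\<And>j. j < n \<Longrightarrow> int b - int j \<in> K \<Longrightarrow> ca b \<le> ca j" using assms(2) by (simp add: T_def)
  have "int b - int a \<in> K" using KI_neg[OF assms(3)] by simp
  then have "ca a = ca b" using Ta[OF bn assms(3)] Tb[OF an] by linarith
  then have "cv a = cv b \<or> cv a = - cv b" unfolding ca_def by (rule abs_eq_iff[THEN iffD1])
  then show ?thesis
  proof
    assume "cv a = cv b" then show ?thesis using cv_inj an bn by blast
  next
    assume c: "cv a = - cv b"
    have cv0: "cv 0 = 0" using n3 by (simp add: cv_def)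
    have e: "(int a + int b) mod int n = (cv a + cv b) mod int n"
      using cv_mod[of a] cv_mod[of b] by (metis mod_add_eq)
    then have "(int a + int b) mod int n = 0 mod int n" using c by simp
    from KI_cong[OF this] have "int a + int b \<in> K" using KI_0 by blast
    have eq: "2 * int a = (int a - int b) + (int a + int b)" by simp
    have "2 * int a \<in> K" unfolding eq by (rule KI_add[OF assms(3) \<open>int a + int b \<in> K\<close>])
    then have "int a - int 0 \<in> K" using KI_half by simp
    then have "ca a \<le> ca 0" using Ta[of 0] n3 by simp
    then have "cv a = 0" using cv0 by (simp add: ca_def)
    then have "a = 0" "cv b = 0" using c cv_inj[of a 0] an n3 cv0 by auto
    then show ?thesis using cv_inj[of b 0] bn n3 cv0 by auto
  qed
qed

lemma T_ng: assumes "a \<in> T" shows "ng a \<in> T"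
  unfolding T_def
proof (intro CollectI conjI allI impI)
  have an: "a < n" using assms by (simp add: T_def)
  show "ng a < n" by (rule ng_lt)
  fix j assume j: "j < n" "int (ng a) - int j \<in> K"
  have "(int a - int (ng j)) mod int n = (- (int (ng a) - int j)) mod int n"
  proof -
    have "(int a - int (ng j)) mod int n = (int a - int (ng j) mod int n) mod int n"
      by (simp add: mod_diff_right_eq)
    also have "\<dots> = (int a - (- int j) mod int n) mod int n" using ng_mod[OF j(1)] by simp
    also have "\<dots> = (int a + int j) mod int n" by (simp add: mod_diff_right_eq)
    finally have 1: "(int a - int (ng j)) mod int n = (int a + int j) mod int n" .
    have "(- (int (ng a) - int j)) mod int n = (int j - int (ng a) mod int n) mod int n"
      by (simp add: mod_diff_right_eq)
    also have "\<dots> = (int j - (- int a) mod int n) mod int n" using ng_mod[OF an] by simp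
    also have "\<dots> = (int j + int a) mod int n" by (simp add: mod_diff_right_eq)
    also have "\<dots> = (int a + int j) mod int n" by (simp add: add.commute)
    finally show ?thesis using 1 by simp
  qed
  then have "int a - int (ng j) \<in> K" using KI_neg[OF j(2)] KI_cong by blast
  then have "ca a \<le> ca (ng j)" using assms ng_lt unfolding T_def by blast
  then show "ca (ng a) \<le> ca j" using ca_ng an j(1) by simp
qed


abbreviation "adj \<equiv> sum_graph_adj G H"

lemma adj_FF: "adj (i,False) (j,False) \<longleftrightarrow> i < n \<and> j < n \<and> i \<noteq> j \<and> int i + int j \<in> K \<and> (i+j) mod n \<noteq> 0"
proof -
  have "adj (i,False) (j,False) \<longleftrightarrow> i < n \<and> j < n \<and> i \<noteq> j \<and> ((i+j) mod n, False) \<in> H \<and> (i+j) mod n \<noteq> 0"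
    by (simp add: sum_graph_adj_def dg_carrier dg_mult dg_one)
  then show ?thesis using KI_nat[of "i+j"] by simp
qed

lemma adj_TT: "adj (i,True) (j,True) \<longleftrightarrow> i < n \<and> j < n \<and> i \<noteq> j \<and> int i - int j \<in> K"
proof -
  have *: "int (i + (n - j)) \<in> K \<longleftrightarrow> int i - int j \<in> K" if "j < n"
  proof -
    have e: "int (i + (n - j)) = (int i - int j) + int n" using that by simp
    have "int (i + (n - j)) mod int n = (int i - int j) mod int n" unfolding e by simp
    then show ?thesis by (rule KI_cong)
  qed
  have **: "(i + (n - j)) mod n = 0 \<longleftrightarrow> i = j" if jn: "j < n" and "i < n" for i j
  proof (cases "i < j")
    case True
    have lt: "i + (n - j) < n" using jn True by arith
    have pos: "i + (n - j) \<noteq> 0" using jn by arith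
    have "(i + (n - j)) mod n \<noteq> 0" using lt pos by simp
    then show ?thesis using True by auto
  next
    case False
    have e: "i + (n - j) = (i - j) + n" using jn False by arith
    have lt: "i - j < n" using \<open>i < n\<close> by arith
    have "(i + (n - j)) mod n = i - j" unfolding e mod_add_self2 using lt by (rule mod_less)
    then show ?thesis using False by auto
  qed
  have "adj (i,True) (j,True) \<longleftrightarrow> i < n \<and> j < n \<and> i \<noteq> j \<and> ((i + (n - j)) mod n, False) \<in> H \<and> (i + (n - j)) mod n \<noteq> 0"
    by (simp add: sum_graph_adj_def dg_carrier dg_mult dg_one)
  also have "\<dots> \<longleftrightarrow> i < n \<and> j < n \<and> i \<noteq> j \<and> int i - int j \<in> K"
  proof (cases "i < n \<and> j < n")
    case True
    have h1: "((i + (n - j)) mod n, False) \<in> H \<longleftrightarrow> int i - int j \<in> K"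
      by (rule trans[OF KI_nat[of "i + (n - j)", symmetric] *[OF conjunct2[OF True]]])
    have h2: "(i + (n - j)) mod n = 0 \<longleftrightarrow> i = j" by (rule **[OF conjunct2[OF True] conjunct1[OF True]])
    show ?thesis unfolding h1 h2 by blast
  next
    case False
    then show ?thesis by blast
  qed
  finally show ?thesis .
qed

lemma adj_mix: "a \<noteq> b \<Longrightarrow> \<not> adj (i,a) (j,b)"
  using norefl by (auto simp: sum_graph_adj_def dg_mult)

lemma main: "perfect_code (carrier G) adj (T \<times> UNIV)"
  unfolding perfect_code_def
proof (intro conjI ballI)
  show "T \<times> UNIV \<subseteq> carrier G" by (auto simp: T_def dg_carrier)
next
  fix x y :: "nat \<times> bool" assume x: "x \<in> T \<times> UNIV" and y: "y \<in> T \<times> UNIV"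
  obtain i a j b where xy: "x = (i,a)" "y = (j,b)" "i \<in> T" "j \<in> T" using x y by auto
  have ijn: "i < n" "j < n" using xy by (auto simp: T_def)
  show "\<not> adj x y"
  proof (cases "a = b")
    case False then show ?thesis using adj_mix xy by simp
  next
    case True
    show ?thesis
    proof (cases a)
      case True
      then show ?thesis using \<open>a = b\<close> xy T_unique adj_TT by auto
    next
      case False
      show ?thesis
      proof
        assume "adj x y"
        then have s: "int i + int j \<in> K" "(i+j) mod n \<noteq> 0" using xy False \<open>a = b\<close> adj_FF by auto
        have "(int i - int (ng j)) mod int n = (int i + int j) mod int n"
        proof -
          have "(int i - int (ng j)) mod int n = (int i - int (ng j) mod int n) mod int n"
            by (simp add: mod_diff_right_eq)
          also have "\<dots> = (int i - (- int j) mod int n) mod int n" using ng_mod[OF ijn(2)] by simp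
          also have "\<dots> = (int i + int j) mod int n" by (simp add: mod_diff_right_eq)
          finally show ?thesis .
        qed
        then have "int i - int (ng j) \<in> K" using s KI_cong by blast
        then have "i = ng j" using T_unique T_ng xy by blast
        then show False using s(2) negmod[OF ijn(2)] by (simp add: ng_def add.commute)
      qed
    qed
  qed
next
  fix v :: "nat \<times> bool" assume v: "v \<in> carrier G - T \<times> UNIV"
  obtain i a where va: "v = (i,a)" "i < n" "i \<notin> T" using v by (cases v) (auto simp: dg_carrier)
  show "\<exists>!c. c \<in> T \<times> UNIV \<and> adj v c"
  proof (cases a)
    case False
    obtain t where t: "t \<in> T" "int t - (- int i) \<in> K" using T_exists by blast
    have tn: "t < n" using t by (simp add: T_def)
    have ne: "(i + t) mod n \<noteq> 0"
    proof
      assume "(i + t) mod n = 0"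
      then have "i = ng t"
      proof (cases "i + t < n")
        case True
        then show ?thesis using \<open>(i + t) mod n = 0\<close> by (simp add: ng_def)
      next
        case False
        then have "i + t = (i + t - n) + n" by simp
        have "(i + t) mod n = (i + t - n) mod n" using False by (simp add: le_mod_geq)
        also have "\<dots> = i + t - n" using va(2) tn by simp
        finally have "i + t = n" using \<open>(i + t) mod n = 0\<close> False by simp
        then show ?thesis using va(2) by (simp add: ng_def)
      qed
      then show False using T_ng[OF t(1)] va by simp
    qed
    have adj1: "adj v (t,False)" using va False t tn ne adj_FF by (auto simp: add.commute)
    show ?thesis
    proof (rule ex1I[of _ "(t,False)"])
      show "(t,False) \<in> T \<times> UNIV \<and> adj v (t,False)" using t adj1 by simp
      fix c assume c: "c \<in> T \<times> UNIV \<and> adj v c"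
      then obtain t' b where c': "c = (t',b)" "t' \<in> T" by auto
      have "b = False" using adj_mix[of False True i t'] c c' va False by (cases b) auto
      then have "int i + int t' \<in> K" using c c' va False adj_FF by auto
      then have "int t - int t' \<in> K" using KI_diff[of "int t - (- int i)" "int i + int t'"] t(2) by simp
      then show "c = (t,False)" using T_unique t c' \<open>b = False\<close> by blast
    qed
  next
    case True
    obtain t where t: "t \<in> T" "int t - int i \<in> K" using T_exists by blast
    have tn: "t < n" using t by (simp add: T_def)
    have adj1: "adj v (t,True)" using va True t tn adj_TT KI_neg[OF t(2)] by auto
    show ?thesis
    proof (rule ex1I[of _ "(t,True)"])
      show "(t,True) \<in> T \<times> UNIV \<and> adj v (t,True)" using t adj1 by simp
      fix c assume c: "c \<in> T \<times> UNIV \<and> adj v c"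
      then obtain t' b where c': "c = (t',b)" "t' \<in> T" by auto
      have "b = True" using adj_mix[of True False i t'] c c' va True by (cases b) auto
      then have "int i - int t' \<in> K" using c c' va True adj_TT by auto
      then have "int t - int t' \<in> K" using KI_add[OF t(2), of "int i - int t'"] by simp
      then show "c = (t,True)" using T_unique t c' \<open>b = True\<close> by blast
    qed
  qed
qed

end

theorem proposition4p2:
  fixes n :: nat and H :: "(nat \<times> bool) set"
  assumes "odd n" and "n \<ge> 3"
    and "H \<lhd> dihedral_group n"
  shows "\<exists>C. perfect_code (carrier (dihedral_group n)) (sum_graph_adj (dihedral_group n) H) C"
proof (cases "\<exists>i. (i, True) \<in> H")
  case True
  then obtain i where i: "(i,True) \<in> H" by blast
  have HG: "H = carrier (dihedral_group n)" using refl_all[OF assms i] .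
  have "perfect_code (carrier (dihedral_group n)) (sum_graph_adj (dihedral_group n) H) {(0,False)}"
    unfolding perfect_code_def
  proof (intro conjI ballI)
    show "{(0, False)} \<subseteq> carrier (dihedral_group n)" using assms(2) by (simp add: dg_carrier)
    show "\<not> sum_graph_adj (dihedral_group n) H x y" if "x \<in> {(0, False)}" "y \<in> {(0, False)}" for x y
      using that by (simp add: sum_graph_adj_def)
    fix v assume v: "v \<in> carrier (dihedral_group n) - {(0, False)}"
    obtain a b where ab: "v = (a,b)" "a < n" using v by (cases v) (auto simp: dg_carrier)
    have m: "v \<otimes>\<^bsub>dihedral_group n\<^esub> (0,False) = v" using ab by (simp add: dg_mult)
    have "sum_graph_adj (dihedral_group n) H v (0,False)"
      unfolding sum_graph_adj_def m using v assms(2) by (auto simp: HG dg_carrier dg_one)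
    then show "\<exists>!c. c \<in> {(0, False)} \<and> sum_graph_adj (dihedral_group n) H v c" by auto
  qed
  then show ?thesis by blast
next
  case False
  interpret dctx n H using assms False by (intro dctx.intro) auto
  show ?thesis using main by blast
qed

end
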